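(* Let $\mathfrak g(V,\omega,D)$ be a generalized oscillator algebra satisfying (C1) $Q(x,y):=\omega(Dx,y)$ is positive definite, (C2) all functionals $\omega(x,\cdot)$, $x\in V$, are $Q$-continuous, and (C3) the map $\eta:V\to V_Q$, $Q(\eta(x),y)=\omega(x,y)$, is continuous, where $V_Q$ is the Hilbert completion of $(V,Q)$ containing $V$ as a dense subspace. Put $\kappa(x,y):=Q(\eta(x),\eta(y))$ for $x,y\in V$, and let $\overline D$ denote the closure in $V_Q$ of $D$ regarded as an unbounded operator with domain $V$. Then $\eta(V)$ lies in the domain of $\overline D$, the map $\eta:(V,\kappa)\to(\eta(V),Q)$ is isometric and extends to an isomorphism $\hat\eta:V_\kappa\to V_Q$ of real Hilbert spaces, and $\eta$ intertwines the unbounded operator $D:V\to V_\kappa$ with the operator $\overline D|_{\eta(V)}=\eta^{-1}:\eta(V)\to V\subseteq V_Q$. Moreover, the closure of $D$ in $V_\kappa$ is injective with dense range.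
   Context: $(V,\omega)$: real locally convex space with continuous non-degenerate alternating form $\omega$; $\gamma:\mathbb R\to\mathrm{Sp}(V,\omega)$ defines a smooth action, $D=\gamma'(0)$; $\mathfrak g(V,\omega,D)=\mathbb R\times V\times\mathbb R$ with bracket $[(z,v,t),(z',v',t')]=(\omega(v,v'),tDv'-t'Dv,0)$. A linear form $\beta$ on $V$ is $Q$-continuous if $\sup\{\beta(v):Q(v,v)\le1\}<\infty$. $V_\kappa$ denotes the Hilbert completion of $(V,\kappa)$. *)

theory Defs
  imports "HOL-Analysis.Analysis"
begin

text \<open>Real locally convex (Hausdorff) topological vector spaces: the type carries a
topology (Hausdorffness is imposed via the class t2_space in the statement) such that
addition and scalar multiplication are jointly continuous and 0 has a neighbourhood
base of convex open sets.\<close>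

definition locally_convex :: "'a::{real_vector,topological_space} itself \<Rightarrow> bool" where
  "locally_convex _ \<longleftrightarrow>
     continuous_on UNIV (\<lambda>p::'a \<times> 'a. fst p + snd p) \<and>
     continuous_on UNIV (\<lambda>p::real \<times> 'a. fst p *\<^sub>R snd p) \<and>
     (\<forall>W::'a set. open W \<and> 0 \<in> W \<longrightarrow> (\<exists>C. open C \<and> convex C \<and> 0 \<in> C \<and> C \<subseteq> W))"

fun iter_dd :: "('a::real_vector \<Rightarrow> 'b::{real_vector,t2_space}) \<Rightarrow> 'a list \<Rightarrow> 'a \<Rightarrow> 'b" where
  "iter_dd f [] x = f x"
| "iter_dd f (h # hs) x =
     Lim (at (0::real)) (\<lambda>t. (1 / t) *\<^sub>R (iter_dd f hs (x + t *\<^sub>R h) - iter_dd f hs x))"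

definition iter_dd_exists :: "('a::real_vector \<Rightarrow> 'b::{real_vector,t2_space}) \<Rightarrow> 'a \<Rightarrow> 'a list \<Rightarrow> 'a \<Rightarrow> bool" where
  "iter_dd_exists f h hs x \<longleftrightarrow>
     (\<exists>y. ((\<lambda>t::real. (1 / t) *\<^sub>R (iter_dd f hs (x + t *\<^sub>R h) - iter_dd f hs x)) \<longlongrightarrow> y) (at 0))"

text \<open>Joint continuity of (x, h1, ..., hj) \<mapsto> d^(j) f(x)(h1,...,hj) on E \<times> E^j
  (product topology, written out with basic open boxes).\<close>
definition iter_dd_continuous :: "('a::{real_vector,topological_space} \<Rightarrow> 'b::{real_vector,t2_space}) \<Rightarrow> nat \<Rightarrow> bool" where
  "iter_dd_continuous f j \<longleftrightarrow>
     (\<forall>x hs W. length hs = j \<and> open W \<and> iter_dd f hs x \<in> W \<longrightarrow>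
        (\<exists>U Us. open U \<and> x \<in> U \<and> list_all2 (\<lambda>h S. open S \<and> h \<in> S) hs Us \<and>
           (\<forall>x' hs'. x' \<in> U \<and> list_all2 (\<in>) hs' Us \<longrightarrow> iter_dd f hs' x' \<in> W)))"

definition bastiani_C :: "nat \<Rightarrow> ('a::{real_vector,topological_space} \<Rightarrow> 'b::{real_vector,t2_space}) \<Rightarrow> bool" where
  "bastiani_C k f \<longleftrightarrow>
     (\<forall>h hs x. length hs < k \<longrightarrow> iter_dd_exists f h hs x) \<and>
     (\<forall>j\<le>k. iter_dd_continuous f j)"

definition bastiani_smooth :: "('a::{real_vector,topological_space} \<Rightarrow> 'b::{real_vector,t2_space}) \<Rightarrow> bool" where
  "bastiani_smooth f \<longleftrightarrow> (\<forall>k. bastiani_C k f)"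

definition symplectic_group :: "('a::{real_vector,topological_space} \<Rightarrow> 'a \<Rightarrow> real) \<Rightarrow> ('a \<Rightarrow> 'a) set" where
  "symplectic_group \<omega> = {g. linear g \<and> bij g \<and> continuous_on UNIV g \<and> continuous_on UNIV (inv g) \<and>
                            (\<forall>x y. \<omega> (g x) (g y) = \<omega> x y)}"

definition smooth_symplectic_action :: "('a::{real_vector,t2_space} \<Rightarrow> 'a \<Rightarrow> real) \<Rightarrow> (real \<Rightarrow> 'a \<Rightarrow> 'a) \<Rightarrow> bool" where
  "smooth_symplectic_action \<omega> \<gamma> \<longleftrightarrow>
     (\<forall>t. \<gamma> t \<in> symplectic_group \<omega>) \<and> \<gamma> 0 = id \<and> (\<forall>s t. \<gamma> (s + t) = \<gamma> s \<circ> \<gamma> t) \<and>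
     bastiani_smooth (\<lambda>p::real \<times> 'a. \<gamma> (fst p) (snd p))"

text \<open>Graph of an operator A with domain the image of the embedding \<iota> (A v is given on
  the elements of V), closure of that graph in the Hilbert space.\<close>
definition closure_graph :: "('v \<Rightarrow> 'h::real_normed_vector) \<Rightarrow> ('v \<Rightarrow> 'v) \<Rightarrow> ('h \<times> 'h) set" where
  "closure_graph \<iota> A = closure {(\<iota> v, \<iota> (A v)) | v. True}"

definition single_valued_rel :: "('h \<times> 'h) set \<Rightarrow> bool" where
  "single_valued_rel G \<longleftrightarrow> (\<forall>a b c. (a, b) \<in> G \<and> (a, c) \<in> G \<longrightarrow> b = c)"

definition injective_rel :: "('h \<times> 'h) set \<Rightarrow> bool" where
  "injective_rel G \<longleftrightarrow> (\<forall>a a' b. (a, b) \<in> G \<and> (a', b) \<in> G \<longrightarrow> a = a')"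

end

theory Submission
  imports Defs
begin


lemma lcs_add:
  assumes "locally_convex TYPE('v::{real_vector,topological_space})"
    and "(f \<longlongrightarrow> (a::'v)) F" "(g \<longlongrightarrow> b) F"
  shows "((\<lambda>x. f x + g x) \<longlongrightarrow> a + b) F"
proof -
  have c: "continuous_on UNIV (\<lambda>p::'v \<times> 'v. fst p + snd p)"
    using assms(1) unfolding locally_convex_def by blast
  have "((\<lambda>x. (f x, g x)) \<longlongrightarrow> (a, b)) F" using assms(2,3) by (rule tendsto_Pair)
  from continuous_on_tendsto_compose[OF c this] show ?thesis by simp
qed

lemma lcs_scale:
  assumes "locally_convex TYPE('v::{real_vector,topological_space})"
    and "(r \<longlongrightarrow> c) F" "(f \<longlongrightarrow> (a::'v)) F"
  shows "((\<lambda>x. r x *\<^sub>R f x) \<longlongrightarrow> c *\<^sub>R a) F"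
proof -
  have cc: "continuous_on UNIV (\<lambda>p::real \<times> 'v. fst p *\<^sub>R snd p)"
    using assms(1) unfolding locally_convex_def by blast
  have "((\<lambda>x. (r x, f x)) \<longlongrightarrow> (c, a)) F" using assms(2,3) by (rule tendsto_Pair)
  from continuous_on_tendsto_compose[OF cc this] show ?thesis by simp
qed

lemma lcs_diff:
  assumes "locally_convex TYPE('v::{real_vector,topological_space})"
    and "(f \<longlongrightarrow> (a::'v)) F" "(g \<longlongrightarrow> b) F"
  shows "((\<lambda>x. f x - g x) \<longlongrightarrow> a - b) F"
proof -
  have "((\<lambda>x. (-1::real) *\<^sub>R g x) \<longlongrightarrow> (-1) *\<^sub>R b) F"
    by (rule lcs_scale[OF assms(1) tendsto_const assms(3)])
  from lcs_add[OF assms(1) assms(2) this] show ?thesis by simp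
qed

lemma subspace_closure_gen:
  fixes S :: "'a::real_normed_vector set"
  assumes "subspace S" shows "subspace (closure S)"
proof -
  have add: "x + y \<in> closure S" if "x \<in> closure S" "y \<in> closure S" for x y
  proof -
    have "closure (S \<times> S) \<subseteq> {p. fst p + snd p \<in> closure S}"
    proof (rule closure_minimal)
      show "S \<times> S \<subseteq> {p. fst p + snd p \<in> closure S}"
        using assms closure_subset unfolding subspace_def by force
      show "closed {p::'a\<times>'a. fst p + snd p \<in> closure S}"
        using continuous_closed_vimage[of "closure S" "\<lambda>p::'a\<times>'a. fst p + snd p"]
        by (simp add: vimage_def continuous_intros)
    qed
    then show ?thesis using that by (auto simp: closure_Times)
  qed
  have sc: "c *\<^sub>R x \<in> closure S" if "x \<in> closure S" for x c
  proof -
    have "closure S \<subseteq> {x. c *\<^sub>R x \<in> closure S}"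
    proof (rule closure_minimal)
      show "S \<subseteq> {x. c *\<^sub>R x \<in> closure S}"
        using assms closure_subset unfolding subspace_def by force
      show "closed {x. c *\<^sub>R x \<in> closure S}"
        using continuous_closed_vimage[of "closure S" "\<lambda>x. c *\<^sub>R x"]
        by (simp add: vimage_def continuous_intros)
    qed
    then show ?thesis using that by auto
  qed
  have "0 \<in> closure S" using assms closure_subset unfolding subspace_def by blast
  then show ?thesis unfolding subspace_def using add sc by blast
qed




lemma parallelogram_aux:
  fixes y a b :: "'a::real_inner"
  shows "(norm (a - b))\<^sup>2 = 2 * (norm (y - a))\<^sup>2 + 2 * (norm (y - b))\<^sup>2 - 4 * (norm (y - (1/2) *\<^sub>R (a + b)))\<^sup>2"
  unfolding power2_norm_eq_inner by (simp add: inner_simps algebra_simps)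

lemma quad_aux:
  fixes p q :: real
  assumes "q \<ge> 0" "\<And>t. 0 \<le> - 2 * t * p + t^2 * q"
  shows "p = 0"
proof -
  define t where "t = p/(q+1)"
  have hp: "p = t*(q+1)" using assms(1) unfolding t_def by simp
  have "0 \<le> - 2 * t * p + t^2 * q" by (rule assms(2))
  also have "\<dots> = -(t^2 * (q+2))" unfolding hp by (simp add: power2_eq_square algebra_simps)
  finally have "t^2 * (q+2) \<le> 0" by simp
  moreover have "0 \<le> t^2 * (q+2)" using assms(1) by simp
  ultimately have "t^2 * (q+2) = 0" by linarith
  then have "t = 0" using assms(1) by simp
  then show ?thesis using hp by simp
qed

lemma closed_subspace_perp_UNIV:
  fixes M :: "'a::{real_inner,complete_space} set"
  assumes sM: "subspace M" and cM: "closed M"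
    and perp: "\<And>w. (\<forall>z\<in>M. inner w z = 0) \<Longrightarrow> w = 0"
  shows "M = UNIV"
proof -
  have M0: "0 \<in> M" and Madd: "\<And>a b. a \<in> M \<Longrightarrow> b \<in> M \<Longrightarrow> a + b \<in> M"
    and Msc: "\<And>c a. a \<in> M \<Longrightarrow> c *\<^sub>R a \<in> M"
    using sM unfolding subspace_def by auto
  have "y \<in> M" for y
  proof -
    define d where "d = Inf ((\<lambda>z. norm (y - z)) ` M)"
    have bdd: "bdd_below ((\<lambda>z. norm (y - z)) ` M)" by (rule bdd_belowI[of _ 0]) auto
    have dle: "d \<le> norm (y - z)" if "z \<in> M" for z
      unfolding d_def by (rule cInf_lower) (use bdd that in auto)
    have d0: "d \<ge> 0" unfolding d_def using M0 by (intro cInf_greatest) auto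
    have "\<exists>z\<in>M. (norm (y - z))\<^sup>2 < d\<^sup>2 + 1 / (real n + 1)" for n
    proof -
      have "d = sqrt (d\<^sup>2)" using d0 by simp
      also have "\<dots> < sqrt (d\<^sup>2 + 1 / (real n + 1))"
        by (rule real_sqrt_less_mono) simp
      finally have "d < sqrt (d\<^sup>2 + 1 / (real n + 1))" .
      then obtain z where "z \<in> M" "norm (y - z) < sqrt (d\<^sup>2 + 1 / (real n + 1))"
        using cInf_lessD[of "(\<lambda>z. norm (y - z)) ` M"] M0 unfolding d_def by fastforce
      moreover have "(norm (y - z))\<^sup>2 < (sqrt (d\<^sup>2 + 1 / (real n + 1)))\<^sup>2"
        by (rule power_strict_mono) (use \<open>norm (y - z) < _\<close> in auto)
      ultimately show ?thesis by auto
    qed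
    then obtain z where zM: "\<And>n. z n \<in> M" and zl: "\<And>n. (norm (y - z n))\<^sup>2 < d\<^sup>2 + 1 / (real n + 1)"
      by metis
    have zz: "(norm (z n - z m))\<^sup>2 \<le> 2 / (real n + 1) + 2 / (real m + 1)" for n m
    proof -
      have "(1/2) *\<^sub>R (z n + z m) \<in> M" using zM Madd Msc by blast
      then have "d \<le> norm (y - (1/2) *\<^sub>R (z n + z m))" by (rule dle)
      then have "d\<^sup>2 \<le> (norm (y - (1/2) *\<^sub>R (z n + z m)))\<^sup>2" using d0 by (simp add: power_mono)
      then show ?thesis using parallelogram_aux[of "z n" "z m" y] zl[of n] zl[of m] by linarith
    qed
    have "Cauchy z"
    proof (rule metric_CauchyI)
      fix e :: real assume e: "0 < e"
      obtain N :: nat where N: "4 / e\<^sup>2 < real N" using reals_Archimedean2 by blast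
      have "dist (z m) (z n) < e" if "m \<ge> N" "n \<ge> N" for m n
      proof -
        have "2 / (real n + 1) \<le> 2 / (real N + 1)" "2 / (real m + 1) \<le> 2 / (real N + 1)"
          using that by (auto simp: frac_le)
        moreover have "4 / (real N + 1) < e\<^sup>2"
        proof -
          have "4 / e\<^sup>2 < real N + 1" using N by linarith
          then have "4 < (real N + 1) * e\<^sup>2" using e by (simp add: pos_divide_less_eq)
          then show ?thesis by (simp add: pos_divide_less_eq mult.commute)
        qed
        ultimately have "(norm (z m - z n))\<^sup>2 < e\<^sup>2" using zz[of m n] by linarith
        then show ?thesis using e by (simp add: dist_norm power_less_imp_less_base)
      qed
      then show "\<exists>M. \<forall>m\<ge>M. \<forall>n\<ge>M. dist (z m) (z n) < e" by blast
    qed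
    then obtain m where zm: "z \<longlonglongrightarrow> m" using convergent_eq_Cauchy by blast
    have mM: "m \<in> M" using cM zM zm closed_sequential_limits by blast
    have mmin: "(norm (y - m))\<^sup>2 \<le> (norm (y - w))\<^sup>2" if "w \<in> M" for w
    proof (rule LIMSEQ_le)
      show "(\<lambda>n. (norm (y - z n))\<^sup>2) \<longlonglongrightarrow> (norm (y - m))\<^sup>2"
        by (intro tendsto_intros zm)
      show "(\<lambda>n. (norm (y - w))\<^sup>2 + 1 / (real n + 1)) \<longlonglongrightarrow> (norm (y - w))\<^sup>2"
        using tendsto_add[OF tendsto_const LIMSEQ_inverse_real_of_nat, of "(norm (y - w))\<^sup>2"]
        by (simp add: inverse_eq_divide add.commute)
      have "d\<^sup>2 \<le> (norm (y - w))\<^sup>2" using dle[OF that] d0 by (simp add: power_mono)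
      then show "\<exists>N. \<forall>n\<ge>N. (norm (y - z n))\<^sup>2 \<le> (norm (y - w))\<^sup>2 + 1 / (real n + 1)"
      proof (intro exI allI impI)
        fix n :: nat
        show "(norm (y - z n))\<^sup>2 \<le> (norm (y - w))\<^sup>2 + 1 / (real n + 1)"
          using zl[of n] \<open>d\<^sup>2 \<le> _\<close> by linarith
      qed
    qed
    have "inner (y - m) w = 0" if "w \<in> M" for w
    proof (rule quad_aux)
      show "0 \<le> (norm w)\<^sup>2" by simp
      fix t :: real
      have "m + t *\<^sub>R w \<in> M" using mM that Madd Msc by blast
      then have "(norm (y - m))\<^sup>2 \<le> (norm (y - (m + t *\<^sub>R w)))\<^sup>2" by (rule mmin)
      also have "(norm (y - (m + t *\<^sub>R w)))\<^sup>2 = (norm (y - m))\<^sup>2 - 2 * t * inner (y - m) w + t^2 * (norm w)\<^sup>2"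
        unfolding power2_norm_eq_inner by (simp add: inner_simps algebra_simps power2_eq_square inner_commute)
      finally show "0 \<le> - 2 * t * inner (y - m) w + t^2 * (norm w)\<^sup>2" by simp
    qed
    then have "y - m = 0" using perp by blast
    then show ?thesis using mM by simp
  qed
  then show ?thesis by blast
qed




locale skewop =
  fixes \<iota> :: "'v::real_vector \<Rightarrow> 'a::{real_inner,complete_space}" and Dop :: "'v \<Rightarrow> 'v"
  assumes lin_i: "linear \<iota>" and lin_D: "linear Dop"
    and skew: "\<And>w v. inner (\<iota> (Dop w)) (\<iota> v) = - inner (\<iota> w) (\<iota> (Dop v))"
    and dense: "closure (range \<iota>) = UNIV"
begin

abbreviation "G \<equiv> closure_graph \<iota> Dop"

lemma perp0: assumes "\<And>v. inner c (\<iota> v) = 0" shows "c = 0"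
proof -
  have "closure (range \<iota>) \<subseteq> {y. inner c y = 0}"
  proof (rule closure_minimal)
    show "range \<iota> \<subseteq> {y. inner c y = 0}" using assms by auto
    show "closed {y. inner c y = 0}" by (intro closed_Collect_eq continuous_intros)
  qed
  then have "inner c c = 0" using dense by (simp add: subset_iff)
  then show ?thesis by simp
qed

lemma graph_in: "(\<iota> v, \<iota> (Dop v)) \<in> G"
  unfolding closure_graph_def by (rule closure_subset[THEN subsetD]) auto

lemma G_sub: "subspace G"
proof -
  have l: "linear (\<lambda>v. (\<iota> v, \<iota> (Dop v)))"
  proof (rule linearI)
    fix x y show "(\<iota> (x + y), \<iota> (Dop (x + y))) = (\<iota> x, \<iota> (Dop x)) + (\<iota> y, \<iota> (Dop y))"
      using linear_add[OF lin_i] linear_add[OF lin_D] by simp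
  next
    fix c x show "(\<iota> (c *\<^sub>R x), \<iota> (Dop (c *\<^sub>R x))) = c *\<^sub>R (\<iota> x, \<iota> (Dop x))"
      using linear_scale[OF lin_i] linear_scale[OF lin_D] by simp
  qed
  have "{(\<iota> v, \<iota> (Dop v)) | v. True} = (\<lambda>v. (\<iota> v, \<iota> (Dop v))) ` UNIV" by auto
  then have "subspace {(\<iota> v, \<iota> (Dop v)) | v. True}"
    using linear_subspace_image[OF l subspace_UNIV] by simp
  then show ?thesis unfolding closure_graph_def by (rule subspace_closure_gen)
qed

lemma G_closed: "closed G" unfolding closure_graph_def by simp

lemma G_skew: assumes "(a, b) \<in> G" shows "inner b (\<iota> v) = - inner a (\<iota> (Dop v))"
proof -
  have "G \<subseteq> {p. inner (snd p) (\<iota> v) + inner (fst p) (\<iota> (Dop v)) = 0}"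
    unfolding closure_graph_def
  proof (rule closure_minimal)
    show "{(\<iota> v, \<iota> (Dop v)) |v. True} \<subseteq> {p. inner (snd p) (\<iota> v) + inner (fst p) (\<iota> (Dop v)) = 0}"
      using skew by auto
    show "closed {p::'a\<times>'a. inner (snd p) (\<iota> v) + inner (fst p) (\<iota> (Dop v)) = 0}"
      by (auto intro!: closed_Collect_eq continuous_intros)
  qed
  then show ?thesis using assms by auto
qed

lemma G_orth: assumes "(a, b) \<in> G" shows "inner a b = 0"
proof -
  have "G \<subseteq> {p. inner (fst p) (snd p) = 0}"
    unfolding closure_graph_def
  proof (rule closure_minimal)
    have "inner (\<iota> v) (\<iota> (Dop v)) = 0" for v
      using skew[of v v] by (simp add: inner_commute)
    then show "{(\<iota> v, \<iota> (Dop v)) |v. True} \<subseteq> {p. inner (fst p) (snd p) = 0}"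
      by auto
    show "closed {p::'a\<times>'a. inner (fst p) (snd p) = 0}"
      by (auto intro!: closed_Collect_eq continuous_intros)
  qed
  then show ?thesis using assms by auto
qed

lemma G_diff: "p \<in> G \<Longrightarrow> q \<in> G \<Longrightarrow> p - q \<in> G"
  using G_sub by (rule subspace_diff)

lemma G_sv: "single_valued_rel G"
  unfolding single_valued_rel_def
proof (intro allI impI)
  fix a b c assume "(a, b) \<in> G \<and> (a, c) \<in> G"
  then have "(0, b - c) \<in> G" using G_diff[of "(a,b)" "(a,c)"] by simp
  then have "inner (b - c) (\<iota> v) = 0" for v using G_skew by fastforce
  then have "b - c = 0" by (rule perp0)
  then show "b = c" by simp
qed

lemma cauchy_transfer:
  fixes x :: "nat \<Rightarrow> 'b::real_normed_vector" and p :: "nat \<Rightarrow> 'c::real_normed_vector"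
  assumes "Cauchy x" "C > 0" "\<And>n m. norm (p n - p m) \<le> C * norm (x n - x m)"
  shows "Cauchy p"
proof (rule metric_CauchyI)
  fix e :: real assume e: "e > 0"
  obtain M where M: "\<forall>m\<ge>M. \<forall>n\<ge>M. dist (x m) (x n) < e / C"
    using metric_CauchyD[OF assms(1), of "e/C"] e assms(2) by auto
  have "dist (p m) (p n) < e" if "m \<ge> M" "n \<ge> M" for m n
  proof -
    have "dist (p m) (p n) \<le> C * dist (x m) (x n)" using assms(3) by (simp add: dist_norm)
    also have "\<dots> < C * (e / C)"
      by (rule mult_strict_left_mono) (use M that assms(2) in auto)
    finally show ?thesis using assms(2) by simp
  qed
  then show "\<exists>M. \<forall>m\<ge>M. \<forall>n\<ge>M. dist (p m) (p n) < e" by blast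
qed

lemma G_range:
  assumes s: "s \<noteq> 0"
    and h: "\<And>c. (\<forall>v. inner c (\<iota> (Dop v) + s *\<^sub>R \<iota> v) = 0) \<Longrightarrow> c = 0"
  shows "\<exists>a b. (a, b) \<in> G \<and> b + s *\<^sub>R a = y"
proof -
  define f where "f = (\<lambda>p::'a\<times>'a. snd p + s *\<^sub>R fst p)"
  have lf: "linear f"
  proof (rule linearI)
    fix x y :: "'a\<times>'a" show "f (x + y) = f x + f y" unfolding f_def by (simp add: algebra_simps)
  next
    fix c and x :: "'a\<times>'a" show "f (c *\<^sub>R x) = c *\<^sub>R f x" unfolding f_def by (simp add: algebra_simps)
  qed
  have cf: "continuous_on UNIV f" unfolding f_def by (auto intro!: continuous_intros)
  define C where "C = sqrt (1 + 1 / s\<^sup>2)"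
  have C0: "C > 0" unfolding C_def by (simp add: add_pos_nonneg)
  have bound: "norm p \<le> C * norm (f p)" if "p \<in> G" for p
  proof -
    obtain a b where p: "p = (a, b)" by (rule prod.exhaust)
    have o: "inner a b = 0" using G_orth that p by simp
    have n1: "(norm (f p))\<^sup>2 = (norm b)\<^sup>2 + s\<^sup>2 * (norm a)\<^sup>2"
    proof -
      have "orthogonal b (s *\<^sub>R a)" unfolding orthogonal_def using o by (simp add: inner_commute)
      then have "(norm (b + s *\<^sub>R a))\<^sup>2 = (norm b)\<^sup>2 + (norm (s *\<^sub>R a))\<^sup>2"
        by (rule norm_add_Pythagorean)
      moreover have "(norm (s *\<^sub>R a))\<^sup>2 = s\<^sup>2 * (norm a)\<^sup>2" by (simp add: power_mult_distrib)
      moreover have "f p = b + s *\<^sub>R a" unfolding f_def p by simp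
      ultimately show ?thesis by simp
    qed
    have n2: "(norm p)\<^sup>2 = (norm a)\<^sup>2 + (norm b)\<^sup>2" unfolding p by (simp add: norm_Pair)
    have sa0: "0 \<le> s\<^sup>2 * (norm a)\<^sup>2" by simp
    have sb0: "0 \<le> (norm b)\<^sup>2" by simp
    have "(norm a)\<^sup>2 = (s\<^sup>2 * (norm a)\<^sup>2) / s\<^sup>2"
      by (rule nonzero_mult_div_cancel_left[symmetric]) (use s in simp)
    also have "\<dots> \<le> (norm (f p))\<^sup>2 / s\<^sup>2"
      by (rule divide_right_mono) (use n1 sb0 in linarith, simp)
    finally have na: "(norm a)\<^sup>2 \<le> (norm (f p))\<^sup>2 / s\<^sup>2" .
    have nb: "(norm b)\<^sup>2 \<le> (norm (f p))\<^sup>2" using n1 sa0 by linarith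
    have "(1 + 1 / s\<^sup>2) * (norm (f p))\<^sup>2 = (norm (f p))\<^sup>2 + (norm (f p))\<^sup>2 / s\<^sup>2"
      by (simp add: distrib_right)
    then have "(norm p)\<^sup>2 \<le> (1 + 1 / s\<^sup>2) * (norm (f p))\<^sup>2" using na nb n2 by linarith
    also have "\<dots> = (C * norm (f p))\<^sup>2"
    proof -
      have cc: "C\<^sup>2 = 1 + 1 / s\<^sup>2" unfolding C_def by (rule real_sqrt_pow2) simp
      show ?thesis unfolding power_mult_distrib cc ..
    qed
    finally have "(norm p)\<^sup>2 \<le> (C * norm (f p))\<^sup>2" .
    moreover have "0 \<le> C * norm (f p)" using C0 by simp
    ultimately show ?thesis by (rule power2_le_imp_le)
  qed
  define R where "R = f ` G"
  have sR: "subspace R" unfolding R_def by (rule linear_subspace_image[OF lf G_sub])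
  have cR: "closed R"
    unfolding closed_sequential_limits
  proof (intro allI impI)
    fix x l assume xl: "(\<forall>n. x n \<in> R) \<and> x \<longlonglongrightarrow> l"
    then have "\<forall>n. \<exists>q. q \<in> G \<and> x n = f q" unfolding R_def image_iff by blast
    then obtain p where p: "\<forall>n. p n \<in> G \<and> x n = f (p n)" using choice[of "\<lambda>n q. q \<in> G \<and> x n = f q"] by blast
    then have pG: "\<And>n. p n \<in> G" and xp: "\<And>n. x n = f (p n)" by auto
    have cx: "Cauchy x" using xl LIMSEQ_imp_Cauchy by auto
    have nb: "norm (p n - p m) \<le> C * norm (x n - x m)" for n m
    proof -
      have "p n - p m \<in> G" by (rule G_diff) (rule pG)+
      then have "norm (p n - p m) \<le> C * norm (f (p n - p m))" by (rule bound)
      also have "f (p n - p m) = f (p n) - f (p m)" by (rule linear_diff[OF lf])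
      also have "\<dots> = x n - x m" by (simp only: xp)
      finally show ?thesis .
    qed
    have "Cauchy p" by (rule cauchy_transfer[OF cx C0 nb])
    then obtain q where pq: "p \<longlonglongrightarrow> q" using convergent_eq_Cauchy by blast
    have qG: "q \<in> G"
      using closed_sequential_limits[THEN iffD1, OF G_closed, rule_format, of p q] pG pq by blast
    have "(\<lambda>n. f (p n)) \<longlonglongrightarrow> f q" using continuous_on_tendsto_compose[OF cf pq] by simp
    moreover have "(\<lambda>n. f (p n)) = x" using xp by (intro ext) simp
    ultimately have xq: "x \<longlonglongrightarrow> f q" by simp
    have "x \<longlonglongrightarrow> l" using xl by blast
    then have "l = f q" using xq by (rule LIMSEQ_unique)
    then show "l \<in> R" unfolding R_def using qG by blast
  qed
  have "R = UNIV"
  proof (rule closed_subspace_perp_UNIV[OF sR cR])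
    fix c assume c: "\<forall>z\<in>R. inner c z = 0"
    have "inner c (\<iota> (Dop v) + s *\<^sub>R \<iota> v) = 0" for v
    proof -
      have "f (\<iota> v, \<iota> (Dop v)) \<in> R" unfolding R_def using graph_in by blast
      then show ?thesis using c unfolding f_def by auto
    qed
    then show "c = 0" using h by blast
  qed
  then have "y \<in> f ` G" unfolding R_def by blast
  then obtain p where "p \<in> G" "y = f p" by blast
  then show ?thesis unfolding f_def by (intro exI[of _ "fst p"] exI[of _ "snd p"]) simp
qed

end



locale osc =
  fixes \<omega> :: "'v::{real_vector,t2_space} \<Rightarrow> 'v \<Rightarrow> real"
    and \<gamma> :: "real \<Rightarrow> 'v \<Rightarrow> 'v"
    and D :: "'v \<Rightarrow> 'v"
    and \<iota>Q :: "'v \<Rightarrow> 'h::{real_inner,complete_space}"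
    and \<eta> :: "'v \<Rightarrow> 'h"
    and \<iota>K :: "'v \<Rightarrow> 'k::{real_inner,complete_space}"
  assumes lcs: "locally_convex TYPE('v)"
    and \<omega>_bilinear: "bilinear \<omega>"
    and \<omega>_alt: "\<forall>x. \<omega> x x = 0"
    and \<omega>_nondeg: "\<forall>x. (\<forall>y. \<omega> x y = 0) \<longrightarrow> x = 0"
    and \<omega>_cont: "continuous_on UNIV (\<lambda>p::'v \<times> 'v. \<omega> (fst p) (snd p))"
    and action: "smooth_symplectic_action \<omega> \<gamma>"
    and D_def: "\<forall>v. ((\<lambda>t. (1 / t) *\<^sub>R (\<gamma> t v - v)) \<longlongrightarrow> D v) (at 0)"
    and \<iota>Q_lin: "linear \<iota>Q"
    and \<iota>Q_inner: "\<forall>x y. inner (\<iota>Q x) (\<iota>Q y) = \<omega> (D x) y"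
    and \<iota>Q_dense: "closure (range \<iota>Q) = UNIV"
    and \<eta>_def: "\<forall>x y. inner (\<eta> x) (\<iota>Q y) = \<omega> x y"
    and \<iota>K_lin: "linear \<iota>K"
    and \<iota>K_inner: "\<forall>x y. inner (\<iota>K x) (\<iota>K y) = inner (\<eta> x) (\<eta> y)"
    and \<iota>K_dense: "closure (range \<iota>K) = UNIV"
begin

lemmas wladd = bilinear_ladd[OF \<omega>_bilinear] and wradd = bilinear_radd[OF \<omega>_bilinear]
  and wlmul = bilinear_lmul[OF \<omega>_bilinear] and wrmul = bilinear_rmul[OF \<omega>_bilinear]
  and wlsub = bilinear_lsub[OF \<omega>_bilinear] and wrsub = bilinear_rsub[OF \<omega>_bilinear]

lemma w_antisym: "\<omega> x y = - \<omega> y x"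
proof -
  have "0 = \<omega> (x + y) (x + y)" using \<omega>_alt by simp
  also have "\<dots> = \<omega> x x + \<omega> x y + (\<omega> y x + \<omega> y y)" by (simp add: wladd wradd)
  finally show ?thesis using \<omega>_alt by simp
qed

lemma Qi: "inner (\<iota>Q x) (\<iota>Q y) = \<omega> (D x) y" using \<iota>Q_inner by blast
lemma ei: "inner (\<eta> x) (\<iota>Q y) = \<omega> x y" using \<eta>_def by blast
lemma Ki: "inner (\<iota>K x) (\<iota>K y) = inner (\<eta> x) (\<eta> y)" using \<iota>K_inner by blast

lemma Q_sym: "\<omega> (D x) y = \<omega> (D y) x"
  using Qi[of x y] Qi[of y x] by (simp add: inner_commute)

lemma skewQ: "\<omega> (D x) y = - \<omega> x (D y)"
  using Q_sym[of x y] w_antisym[of "D y" x] by simp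

lemma nondeg: "(\<And>y. \<omega> x y = 0) \<Longrightarrow> x = 0" using \<omega>_nondeg by blast

lemma D_lin: "linear D"
proof (rule linearI)
  fix a b
  have "\<omega> (D (a + b) - D a - D b) y = 0" for y
  proof -
    have "\<omega> (D (a + b) - D a - D b) y = \<omega> (D (a + b)) y - \<omega> (D a) y - \<omega> (D b) y"
      by (simp add: wlsub)
    also have "\<dots> = inner (\<iota>Q (a + b)) (\<iota>Q y) - inner (\<iota>Q a) (\<iota>Q y) - inner (\<iota>Q b) (\<iota>Q y)"
      by (simp add: Qi)
    also have "\<dots> = 0" by (simp add: linear_add[OF \<iota>Q_lin] inner_add_left)
    finally show ?thesis .
  qed
  then have "D (a + b) - D a - D b = 0" by (rule nondeg)
  then show "D (a + b) = D a + D b" by (simp add: algebra_simps)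
next
  fix c a
  have "\<omega> (D (c *\<^sub>R a) - c *\<^sub>R D a) y = 0" for y
  proof -
    have "\<omega> (D (c *\<^sub>R a) - c *\<^sub>R D a) y = \<omega> (D (c *\<^sub>R a)) y - c * \<omega> (D a) y"
      by (simp add: wlsub wlmul)
    also have "\<dots> = inner (\<iota>Q (c *\<^sub>R a)) (\<iota>Q y) - c * inner (\<iota>Q a) (\<iota>Q y)"
      by (simp add: Qi)
    also have "\<dots> = 0" by (simp add: linear_scale[OF \<iota>Q_lin])
    finally show ?thesis .
  qed
  then have "D (c *\<^sub>R a) - c *\<^sub>R D a = 0" by (rule nondeg)
  then show "D (c *\<^sub>R a) = c *\<^sub>R D a" by simp
qed

sublocale Qs: skewop \<iota>Q D
  by (rule skewop.intro[OF \<iota>Q_lin D_lin _ \<iota>Q_dense]) (simp add: Qi skewQ)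

lemma eta_D: "\<eta> (D w) = \<iota>Q w"
proof -
  have "inner (\<eta> (D w) - \<iota>Q w) (\<iota>Q y) = 0" for y
    by (simp add: inner_diff_left ei Qi)
  then have "\<eta> (D w) - \<iota>Q w = 0" by (rule Qs.perp0)
  then show ?thesis by simp
qed

lemma eta_lin: "linear \<eta>"
proof (rule linearI)
  fix a b
  have "inner (\<eta> (a + b) - \<eta> a - \<eta> b) (\<iota>Q y) = 0" for y
    by (simp add: inner_diff_left ei wladd)
  then have "\<eta> (a + b) - \<eta> a - \<eta> b = 0" by (rule Qs.perp0)
  then show "\<eta> (a + b) = \<eta> a + \<eta> b" by (simp add: algebra_simps)
next
  fix c a
  have "inner (\<eta> (c *\<^sub>R a) - c *\<^sub>R \<eta> a) (\<iota>Q y) = 0" for y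
    by (simp add: inner_diff_left ei wlmul)
  then have "\<eta> (c *\<^sub>R a) - c *\<^sub>R \<eta> a = 0" by (rule Qs.perp0)
  then show "\<eta> (c *\<^sub>R a) = c *\<^sub>R \<eta> a" by simp
qed

lemma Kskew: "inner (\<iota>K (D w)) (\<iota>K v) = - inner (\<iota>K w) (\<iota>K (D v))"
proof -
  have "inner (\<iota>K (D w)) (\<iota>K v) = \<omega> v w"
    by (simp add: Ki eta_D inner_commute ei)
  moreover have "inner (\<iota>K w) (\<iota>K (D v)) = \<omega> w v"
    by (simp add: Ki eta_D ei)
  ultimately show ?thesis using w_antisym[of v w] by simp
qed

sublocale Ks: skewop \<iota>K D
  by (rule skewop.intro[OF \<iota>K_lin D_lin _ \<iota>K_dense]) (rule Kskew)

end



context osc begin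

lemma g_lin: "linear (\<gamma> t)" and g_cont: "continuous_on UNIV (\<gamma> t)"
  and g_pres: "\<omega> (\<gamma> t x) (\<gamma> t y) = \<omega> x y"
  and g_add: "\<gamma> (s + t) u = \<gamma> s (\<gamma> t u)"
  using action unfolding smooth_symplectic_action_def symplectic_group_def by auto

lemma Dlim: "((\<lambda>h. (1 / h) *\<^sub>R (\<gamma> h v - v)) \<longlongrightarrow> D v) (at 0)"
  using D_def by blast

lemma D_comm: "D (\<gamma> t u) = \<gamma> t (D u)"
proof -
  have eq: "(1 / h) *\<^sub>R (\<gamma> h (\<gamma> t u) - \<gamma> t u) = \<gamma> t ((1 / h) *\<^sub>R (\<gamma> h u - u))" for h
  proof -
    have "\<gamma> h (\<gamma> t u) = \<gamma> t (\<gamma> h u)" using g_add[of h t u] g_add[of t h u] by (simp add: add.commute)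
    then show ?thesis by (simp add: linear_scale[OF g_lin] linear_diff[OF g_lin])
  qed
  have "((\<lambda>h. \<gamma> t ((1 / h) *\<^sub>R (\<gamma> h u - u))) \<longlongrightarrow> \<gamma> t (D u)) (at 0)"
    by (rule continuous_on_tendsto_compose[OF g_cont Dlim]) auto
  then have "((\<lambda>h. (1 / h) *\<^sub>R (\<gamma> h (\<gamma> t u) - \<gamma> t u)) \<longlongrightarrow> \<gamma> t (D u)) (at 0)"
    by (simp only: eq)
  moreover note Dlim[of "\<gamma> t u"]
  ultimately show ?thesis using tendsto_unique[OF trivial_limit_at] by blast
qed

lemma Q_pres: "norm (\<iota>Q (\<gamma> t v)) = norm (\<iota>Q v)"
proof -
  have "inner (\<iota>Q (\<gamma> t v)) (\<iota>Q (\<gamma> t v)) = inner (\<iota>Q v) (\<iota>Q v)"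
    by (simp add: Qi D_comm g_pres)
  then show ?thesis by (simp add: norm_eq_sqrt_inner)
qed

lemma Qderiv: "((\<lambda>h. \<iota>Q ((1 / h) *\<^sub>R (\<gamma> h u - u))) \<longlongrightarrow> \<iota>Q (D u)) (at 0)"
proof -
  define w where "w = (\<lambda>h. (1 / h) *\<^sub>R (\<gamma> h u - u) - D u)"
  have w0: "(w \<longlongrightarrow> 0) (at 0)"
    unfolding w_def using lcs_diff[OF lcs Dlim[of u] tendsto_const[of "D u"]] by simp
  have Dw: "D (w h) = (1 / h) *\<^sub>R (\<gamma> h (D u) - D u) - D (D u)" for h
    unfolding w_def by (simp add: linear_diff[OF D_lin] linear_scale[OF D_lin] D_comm)
  have Dw0: "((\<lambda>h. D (w h)) \<longlongrightarrow> 0) (at 0)"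
    unfolding Dw using lcs_diff[OF lcs Dlim[of "D u"] tendsto_const[of "D (D u)"]] by simp
  have "((\<lambda>h. \<omega> (fst (D (w h), w h)) (snd (D (w h), w h))) \<longlongrightarrow> \<omega> (fst (0::'v, 0::'v)) (snd (0::'v, 0::'v))) (at 0)"
    by (rule continuous_on_tendsto_compose[OF \<omega>_cont tendsto_Pair[OF Dw0 w0]]) auto
  then have om: "((\<lambda>h. \<omega> (D (w h)) (w h)) \<longlongrightarrow> 0) (at 0)"
    using bilinear_lzero[OF \<omega>_bilinear] by simp
  have nw: "norm (\<iota>Q (w h)) = sqrt (\<omega> (D (w h)) (w h))" for h
    by (simp add: norm_eq_sqrt_inner Qi)
  have "((\<lambda>h. norm (\<iota>Q (w h))) \<longlongrightarrow> 0) (at 0)"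
    unfolding nw using tendsto_real_sqrt[OF om] by simp
  then have "((\<lambda>h. \<iota>Q (w h)) \<longlongrightarrow> 0) (at 0)" by (simp only: tendsto_norm_zero_iff)
  moreover have "\<iota>Q (w h) = \<iota>Q ((1 / h) *\<^sub>R (\<gamma> h u - u)) - \<iota>Q (D u)" for h
    unfolding w_def by (rule linear_diff[OF \<iota>Q_lin])
  ultimately have "((\<lambda>h. \<iota>Q ((1 / h) *\<^sub>R (\<gamma> h u - u)) - \<iota>Q (D u)) \<longlongrightarrow> 0) (at 0)" by simp
  then show ?thesis by (simp only: Lim_null[symmetric])
qed

end



context osc begin

lemma g0: "\<gamma> 0 v = v"
  using action unfolding smooth_symplectic_action_def by auto

lemma ode_zero:
  assumes s: "s \<noteq> 0" and h: "\<forall>v. inner c (\<iota>Q (D v) + s *\<^sub>R \<iota>Q v) = 0"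
  shows "c = 0"
proof -
  have "inner c (\<iota>Q v) = 0" for v
  proof -
    define g where "g t = inner c (\<iota>Q (\<gamma> t v))" for t
    have hh: "inner c (\<iota>Q (D u)) = - s * inner c (\<iota>Q u)" for u
      using h[rule_format, of u] by (simp add: inner_add_right)
    have gd: "(g has_field_derivative (- s * g t)) (at t)" for t
    proof -
      have eq: "inner c (\<iota>Q ((1/h) *\<^sub>R (\<gamma> h (\<gamma> t v) - \<gamma> t v))) = (g (t + h) - g t) / h" for h
      proof -
        have "\<gamma> h (\<gamma> t v) = \<gamma> (t + h) v" using g_add[of h t v] by (simp add: add.commute)
        then show ?thesis unfolding g_def
          by (simp add: linear_scale[OF \<iota>Q_lin] linear_diff[OF \<iota>Q_lin] inner_diff_right divide_inverse mult.commute)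
      qed
      have "((\<lambda>h. inner c (\<iota>Q ((1/h) *\<^sub>R (\<gamma> h (\<gamma> t v) - \<gamma> t v)))) \<longlongrightarrow> inner c (\<iota>Q (D (\<gamma> t v)))) (at 0)"
        by (intro tendsto_inner tendsto_const Qderiv)
      then have "((\<lambda>h. (g (t + h) - g t) / h) \<longlongrightarrow> - s * g t) (at 0)"
        unfolding eq hh g_def .
      then show ?thesis by (simp add: DERIV_def)
    qed
    define k where "k t = exp (s * t) * g t" for t
    have kd: "(k has_real_derivative 0) (at t)" for t
    proof -
      have e: "((\<lambda>t. exp (s * t)) has_real_derivative exp (s * t) * s) (at t)"
        by (auto intro!: derivative_eq_intros)
      have "(k has_real_derivative (exp (s * t) * s * g t + (- s * g t) * exp (s * t))) (at t)"
        unfolding k_def by (rule DERIV_mult[OF e gd])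
      moreover have "exp (s * t) * s * g t + (- s * g t) * exp (s * t) = 0" by simp
      ultimately show ?thesis by simp
    qed
    have kc: "k t = g 0" for t
      using DERIV_isconst_all[of k t 0] kd unfolding k_def by simp
    define M where "M = norm c * norm (\<iota>Q v)"
    have gb: "\<bar>g t\<bar> \<le> M" for t
      unfolding g_def M_def using Cauchy_Schwarz_ineq2[of c "\<iota>Q (\<gamma> t v)"] Q_pres[of t v] by simp
    have M0: "M \<ge> 0" unfolding M_def by simp
    have "g 0 = 0"
    proof (rule ccontr)
      assume nz: "g 0 \<noteq> 0"
      define a where "a = \<bar>g 0\<bar> / (2 * M + 2)"
      have a0: "a > 0" unfolding a_def using nz M0 by simp
      define t where "t = ln a / s"
      have et: "exp (s * t) = a" unfolding t_def using s a0 by simp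
      have "\<bar>g 0\<bar> = \<bar>exp (s * t) * g t\<bar>" using kc[of t] unfolding k_def by simp
      also have "\<dots> = exp (s * t) * \<bar>g t\<bar>" by (simp add: abs_mult)
      also have "\<dots> \<le> a * M" unfolding et using gb[of t] a0 by (simp add: mult_left_mono)
      also have "\<dots> < \<bar>g 0\<bar>"
      proof -
        have p: "0 < \<bar>g 0\<bar>" using nz by simp
        have "0 \<le> M * \<bar>g 0\<bar>" using M0 p by simp
        then have "0 < M * \<bar>g 0\<bar> + \<bar>g 0\<bar> * 2" using p by linarith
        then show ?thesis unfolding a_def using nz M0 by (simp add: field_simps)
      qed
      finally show False by simp
    qed
    then show ?thesis unfolding g_def by (simp add: g0)
  qed
  then show ?thesis by (rule Qs.perp0)
qed

end



context osc begin

lemma eta_in_G: "(\<eta> x, \<iota>Q x) \<in> closure_graph \<iota>Q D"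
proof -
  define z where "z = \<eta> x"
  have h1: "\<And>c. (\<forall>v. inner c (\<iota>Q (D v) + 1 *\<^sub>R \<iota>Q v) = 0) \<Longrightarrow> c = 0"
    by (rule ode_zero[of 1]) simp_all
  obtain u b where ub: "(u, b) \<in> closure_graph \<iota>Q D" and bu: "b + 1 *\<^sub>R u = \<iota>Q x + z"
    using Qs.G_range[of 1 "\<iota>Q x + z", OF _ h1] by auto
  define w where "w = z - u"
  have "inner w (\<iota>Q (D v) + (-1) *\<^sub>R \<iota>Q v) = 0" for v
  proof -
    have a1: "inner z (\<iota>Q (D v)) = - inner (\<iota>Q x) (\<iota>Q v)"
      unfolding z_def by (simp add: ei Qi skewQ)
    have a2: "inner u (\<iota>Q (D v)) = - inner b (\<iota>Q v)"
      using Qs.G_skew[OF ub, of v] by simp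
    have b: "b = \<iota>Q x + z - u" using bu by (simp add: algebra_simps)
    have "inner w (\<iota>Q (D v)) = inner z (\<iota>Q (D v)) - inner u (\<iota>Q (D v))"
      unfolding w_def by (rule inner_diff_left)
    also have "\<dots> = inner b (\<iota>Q v) - inner (\<iota>Q x) (\<iota>Q v)" using a1 a2 by simp
    also have "\<dots> = inner (b - \<iota>Q x) (\<iota>Q v)" by (simp add: inner_diff_left)
    also have "b - \<iota>Q x = w" unfolding b w_def by simp
    finally have "inner w (\<iota>Q (D v)) = inner w (\<iota>Q v)" .
    then show ?thesis by (simp add: inner_add_right inner_diff_right)
  qed
  then have "w = 0" by (intro ode_zero[of "-1"]) auto
  then have "u = z" "b = \<iota>Q x" using bu unfolding w_def by auto
  then show ?thesis using ub unfolding z_def by simp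
qed

lemma nK: "norm (\<eta> x) = norm (\<iota>K x)"
  by (simp add: norm_eq_sqrt_inner Ki)

lemma nK2: "norm (\<eta> a - \<eta> b) = norm (\<iota>K a - \<iota>K b)"
  using nK[of "a - b"] by (simp add: linear_diff[OF eta_lin] linear_diff[OF \<iota>K_lin])

lemma ext_exists:
  "\<exists>g::'k \<Rightarrow> 'h. linear g \<and> bij g \<and> (\<forall>u w. inner (g u) (g w) = inner u w) \<and> (\<forall>x. g (\<iota>K x) = \<eta> x)"
proof -
  define X where "X = range \<iota>K"
  define f where "f y = \<eta> (SOME x. \<iota>K x = y)" for y
  have fX: "f (\<iota>K x) = \<eta> x" for x
  proof -
    have "\<iota>K (SOME x'. \<iota>K x' = \<iota>K x) = \<iota>K x" by (rule someI) (rule refl)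
    then have "norm (\<eta> (SOME x'. \<iota>K x' = \<iota>K x) - \<eta> x) = 0" by (simp add: nK2)
    then show ?thesis unfolding f_def by simp
  qed
  have uc: "uniformly_continuous_on X f"
    unfolding uniformly_continuous_on_def
  proof (intro allI impI)
    fix e :: real assume e: "e > 0"
    show "\<exists>d>0. \<forall>x\<in>X. \<forall>x'\<in>X. dist x' x < d \<longrightarrow> dist (f x') (f x) < e"
    proof (intro exI[of _ e] conjI ballI impI)
      fix x x' assume "x \<in> X" "x' \<in> X" "dist x' x < e"
      then obtain a a' where "x = \<iota>K a" "x' = \<iota>K a'" unfolding X_def by blast
      then show "dist (f x') (f x) < e" using \<open>dist x' x < e\<close> by (simp add: fX dist_norm nK2)
    qed (rule e)
  qed
  obtain g where guc: "uniformly_continuous_on (closure X) g" and gf: "\<And>x. x \<in> X \<Longrightarrow> f x = g x"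
    by (rule uniformly_continuous_on_extension_on_closure[OF uc]) blast
  have cX: "closure X = UNIV" unfolding X_def by (rule \<iota>K_dense)
  have gc: "continuous_on UNIV g" using uniformly_continuous_imp_continuous[OF guc] cX by simp
  have gK: "g (\<iota>K x) = \<eta> x" for x using gf[of "\<iota>K x"] fX[of x] unfolding X_def by simp
  have cXX: "closure (X \<times> X) = UNIV" by (simp add: closure_Times cX)
  have cUX: "closure ((UNIV::real set) \<times> X) = UNIV" by (simp add: closure_Times cX)
  have gadd: "g (a + b) = g a + g b" for a b
  proof -
    have "closure (X \<times> X) \<subseteq> {p. g (fst p + snd p) = g (fst p) + g (snd p)}"
    proof (rule closure_minimal)
      show "X \<times> X \<subseteq> {p. g (fst p + snd p) = g (fst p) + g (snd p)}"
        unfolding X_def by (auto simp: gK linear_add[OF \<iota>K_lin, symmetric] linear_add[OF eta_lin])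
      have c1: "continuous_on UNIV (\<lambda>p::'k\<times>'k. g (fst p + snd p))"
        by (rule continuous_on_compose2[OF gc]) (auto intro!: continuous_intros)
      have c2: "continuous_on UNIV (\<lambda>p::'k\<times>'k. g (fst p) + g (snd p))"
        by (intro continuous_intros continuous_on_compose2[OF gc]) auto
      show "closed {p::'k\<times>'k. g (fst p + snd p) = g (fst p) + g (snd p)}"
        by (rule closed_Collect_eq[OF c1 c2])
    qed
    then have "(a, b) \<in> {p. g (fst p + snd p) = g (fst p) + g (snd p)}"
      unfolding cXX by (rule subsetD) simp
    then show ?thesis by simp
  qed
  have gsc: "g (c *\<^sub>R a) = c *\<^sub>R g a" for c a
  proof -
    have "closure ((UNIV::real set) \<times> X) \<subseteq> {p. g (fst p *\<^sub>R snd p) = fst p *\<^sub>R g (snd p)}"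
    proof (rule closure_minimal)
      show "(UNIV::real set) \<times> X \<subseteq> {p. g (fst p *\<^sub>R snd p) = fst p *\<^sub>R g (snd p)}"
        unfolding X_def by (auto simp: gK linear_scale[OF \<iota>K_lin, symmetric] linear_scale[OF eta_lin])
      have c1: "continuous_on UNIV (\<lambda>p::real\<times>'k. g (fst p *\<^sub>R snd p))"
        by (rule continuous_on_compose2[OF gc]) (auto intro!: continuous_intros)
      have c2: "continuous_on UNIV (\<lambda>p::real\<times>'k. fst p *\<^sub>R g (snd p))"
        by (intro continuous_intros continuous_on_compose2[OF gc]) auto
      show "closed {p::real\<times>'k. g (fst p *\<^sub>R snd p) = fst p *\<^sub>R g (snd p)}"
        by (rule closed_Collect_eq[OF c1 c2])
    qed
    then have "(c, a) \<in> {p. g (fst p *\<^sub>R snd p) = fst p *\<^sub>R g (snd p)}"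
      unfolding cUX by (rule subsetD) simp
    then show ?thesis by simp
  qed
  have ginner: "inner (g a) (g b) = inner a b" for a b
  proof -
    have "closure (X \<times> X) \<subseteq> {p. inner (g (fst p)) (g (snd p)) = inner (fst p) (snd p)}"
    proof (rule closure_minimal)
      show "X \<times> X \<subseteq> {p. inner (g (fst p)) (g (snd p)) = inner (fst p) (snd p)}"
        unfolding X_def by (auto simp: gK Ki)
      have c1: "continuous_on UNIV (\<lambda>p::'k\<times>'k. inner (g (fst p)) (g (snd p)))"
        by (intro continuous_intros continuous_on_compose2[OF gc]) auto
      show "closed {p::'k\<times>'k. inner (g (fst p)) (g (snd p)) = inner (fst p) (snd p)}"
        by (rule closed_Collect_eq[OF c1]) (intro continuous_intros)
    qed
    then have "(a, b) \<in> {p. inner (g (fst p)) (g (snd p)) = inner (fst p) (snd p)}"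
      unfolding cXX by (rule subsetD) simp
    then show ?thesis by simp
  qed
  have gnorm: "norm (g a) = norm a" for a by (simp add: norm_eq_sqrt_inner ginner)
  have lg: "linear g" by (rule linearI) (simp_all add: gadd gsc)
  have inj: "inj g"
  proof (rule injI)
    fix a b assume "g a = g b"
    then have "g (a - b) = 0" using linear_diff[OF lg] by simp
    then have "norm (a - b) = 0" using gnorm[of "a - b"] by simp
    then show "a = b" by simp
  qed
  have blg: "bounded_linear g"
    by (rule bounded_linear_intro[of _ 1]) (simp_all add: gadd gsc gnorm)
  have "complete (g ` UNIV)"
    by (rule complete_isometric_image[of 1]) (simp_all add: subspace_UNIV blg gnorm complete_UNIV)
  then have cl: "closed (range g)" by (rule complete_imp_closed)
  have "range \<iota>Q \<subseteq> range g"
  proof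
    fix y assume "y \<in> range \<iota>Q"
    then obtain v where "y = \<iota>Q v" by blast
    then have "y = g (\<iota>K (D v))" by (simp add: gK eta_D)
    then show "y \<in> range g" by blast
  qed
  then have "closure (range \<iota>Q) \<subseteq> range g" using cl by (rule closure_minimal)
  then have "surj g" using \<iota>Q_dense by auto
  then have "bij g" using inj by (simp add: bij_def)
  then show ?thesis using lg ginner gK by blast
qed

end



context osc begin

lemma KD_dense: "closure (range (\<lambda>v. \<iota>K (D v))) = UNIV"
proof -
  obtain g :: "'k \<Rightarrow> 'h" where lg: "linear g" and gi: "\<forall>u w. inner (g u) (g w) = inner u w"
    and gK: "\<forall>x. g (\<iota>K x) = \<eta> x"
    using ext_exists by blast
  have gn: "norm (g a) = norm a" for a using gi by (simp add: norm_eq_sqrt_inner)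
  have "y \<in> closure (range (\<lambda>v. \<iota>K (D v)))" for y
  proof -
    have "g y \<in> closure (range \<iota>Q)" using \<iota>Q_dense by simp
    then obtain xs where xs: "\<forall>n. xs n \<in> range \<iota>Q" and xl: "xs \<longlonglongrightarrow> g y"
      unfolding closure_sequential by blast
    have "\<forall>n. \<exists>v. xs n = \<iota>Q v" using xs by blast
    then obtain v where v: "\<forall>n. xs n = \<iota>Q (v n)" using choice[of "\<lambda>n v. xs n = \<iota>Q v"] by blast
    have nn: "norm (\<iota>K (D (v n)) - y) = norm (xs n - g y)" for n
    proof -
      have "norm (\<iota>K (D (v n)) - y) = norm (g (\<iota>K (D (v n)) - y))" by (simp add: gn)
      also have "g (\<iota>K (D (v n)) - y) = xs n - g y"
        using linear_diff[OF lg, of "\<iota>K (D (v n))" y] gK v eta_D by simp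
      finally show ?thesis .
    qed
    have "((\<lambda>n. xs n - g y) \<longlonglongrightarrow> 0)" using xl by (simp only: Lim_null[symmetric])
    then have "((\<lambda>n. norm (xs n - g y)) \<longlonglongrightarrow> 0)" by (simp only: tendsto_norm_zero_iff)
    then have "((\<lambda>n. norm (\<iota>K (D (v n)) - y)) \<longlonglongrightarrow> 0)" by (simp only: nn)
    then have "((\<lambda>n. \<iota>K (D (v n)) - y) \<longlonglongrightarrow> 0)" by (simp only: tendsto_norm_zero_iff)
    then have "((\<lambda>n. \<iota>K (D (v n))) \<longlonglongrightarrow> y)" by (simp only: Lim_null[symmetric])
    moreover have "\<forall>n. \<iota>K (D (v n)) \<in> range (\<lambda>v. \<iota>K (D v))" by blast
    ultimately show ?thesis unfolding closure_sequential by (intro exI[of _ "\<lambda>n. \<iota>K (D (v n))"]) simp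
  qed
  then show ?thesis by blast
qed

lemma perpKD: assumes "\<And>v. inner c (\<iota>K (D v)) = 0" shows "c = 0"
proof -
  have "closure (range (\<lambda>v. \<iota>K (D v))) \<subseteq> {y. inner c y = 0}"
  proof (rule closure_minimal)
    show "range (\<lambda>v. \<iota>K (D v)) \<subseteq> {y. inner c y = 0}" using assms by auto
    show "closed {y. inner c y = 0}" by (intro closed_Collect_eq continuous_intros)
  qed
  then have "inner c c = 0" using KD_dense by (simp add: subset_iff)
  then show ?thesis by simp
qed

lemma K_inj: "injective_rel (closure_graph \<iota>K D)"
  unfolding injective_rel_def
proof (intro allI impI)
  fix a a' b assume h: "(a, b) \<in> closure_graph \<iota>K D \<and> (a', b) \<in> closure_graph \<iota>K D"
  then have "(a, b) - (a', b) \<in> closure_graph \<iota>K D" by (intro Ks.G_diff) auto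
  then have m: "(a - a', 0) \<in> closure_graph \<iota>K D" by simp
  have "inner (a - a') (\<iota>K (D v)) = 0" for v using Ks.G_skew[OF m, of v] by simp
  then have "a - a' = 0" by (rule perpKD)
  then show "a = a'" by simp
qed

lemma K_range: "closure (snd ` closure_graph \<iota>K D) = UNIV"
proof -
  have "range (\<lambda>v. \<iota>K (D v)) \<subseteq> snd ` closure_graph \<iota>K D"
  proof
    fix y assume "y \<in> range (\<lambda>v. \<iota>K (D v))"
    then obtain v where y: "y = \<iota>K (D v)" by blast
    have "(\<iota>K v, \<iota>K (D v)) \<in> closure_graph \<iota>K D" by (rule Ks.graph_in)
    then show "y \<in> snd ` closure_graph \<iota>K D" unfolding y by (rule rev_image_eqI) simp
  qed
  then have "closure (range (\<lambda>v. \<iota>K (D v))) \<subseteq> closure (snd ` closure_graph \<iota>K D)"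
    by (rule closure_mono)
  then show ?thesis using KD_dense by auto
qed

lemma main:
  "single_valued_rel (closure_graph \<iota>Q D)
       \<and> (\<forall>x. (\<eta> x, \<iota>Q x) \<in> closure_graph \<iota>Q D)
       \<and> (\<forall>x y. norm (\<eta> x - \<eta> y) = norm (\<iota>K x - \<iota>K y))
       \<and> (\<exists>\<eta>h :: 'k \<Rightarrow> 'h. linear \<eta>h \<and> bij \<eta>h \<and> (\<forall>u w. inner (\<eta>h u) (\<eta>h w) = inner u w)
            \<and> (\<forall>x. \<eta>h (\<iota>K x) = \<eta> x)
            \<and> (\<forall>x. (\<eta>h (\<iota>K x), \<eta>h (\<iota>K (D x))) \<in> closure_graph \<iota>Q D))
       \<and> single_valued_rel (closure_graph \<iota>K D)
       \<and> injective_rel (closure_graph \<iota>K D)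
       \<and> closure (snd ` closure_graph \<iota>K D) = UNIV"
proof -
  obtain g :: "'k \<Rightarrow> 'h" where g: "linear g" "bij g" "\<forall>u w. inner (g u) (g w) = inner u w"
    and gK: "\<forall>x. g (\<iota>K x) = \<eta> x"
    using ext_exists by blast
  have "\<forall>x. (g (\<iota>K x), g (\<iota>K (D x))) \<in> closure_graph \<iota>Q D"
    using gK eta_D eta_in_G by simp
  then have ex: "\<exists>\<eta>h :: 'k \<Rightarrow> 'h. linear \<eta>h \<and> bij \<eta>h \<and> (\<forall>u w. inner (\<eta>h u) (\<eta>h w) = inner u w)
            \<and> (\<forall>x. \<eta>h (\<iota>K x) = \<eta> x)
            \<and> (\<forall>x. (\<eta>h (\<iota>K x), \<eta>h (\<iota>K (D x))) \<in> closure_graph \<iota>Q D)"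
    using g gK by blast
  show ?thesis using Qs.G_sv eta_in_G nK2 ex Ks.G_sv K_inj K_range by blast
qed

end


theorem lemma3p10:
  fixes \<omega> :: "'v::{real_vector,t2_space} \<Rightarrow> 'v \<Rightarrow> real"
    and \<gamma> :: "real \<Rightarrow> 'v \<Rightarrow> 'v"
    and D :: "'v \<Rightarrow> 'v"
    and \<iota>Q :: "'v \<Rightarrow> 'h::{real_inner,complete_space}"
    and \<eta> :: "'v \<Rightarrow> 'h"
    and \<iota>K :: "'v \<Rightarrow> 'k::{real_inner,complete_space}"
  assumes lcs: "locally_convex TYPE('v)"
    and \<omega>_bilinear: "bilinear \<omega>"
    and \<omega>_alt: "\<forall>x. \<omega> x x = 0"
    and \<omega>_nondeg: "\<forall>x. (\<forall>y. \<omega> x y = 0) \<longrightarrow> x = 0"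
    and \<omega>_cont: "continuous_on UNIV (\<lambda>p::'v \<times> 'v. \<omega> (fst p) (snd p))"
    and action: "smooth_symplectic_action \<omega> \<gamma>"
    and D_def: "\<forall>v. ((\<lambda>t. (1 / t) *\<^sub>R (\<gamma> t v - v)) \<longlongrightarrow> D v) (at 0)"
    \<comment> \<open>(C1) Q(x,y) = \<omega>(Dx,y) is positive definite\<close>
    and C1: "\<forall>x. x \<noteq> 0 \<longrightarrow> \<omega> (D x) x > 0"
    \<comment> \<open>(C2) every \<omega>(x,.) is Q-continuous\<close>
    and C2: "\<forall>x. bdd_above ((\<lambda>v. \<omega> x v) ` {v. \<omega> (D v) v \<le> 1})"
    \<comment> \<open>V_Q: Hilbert completion of (V,Q), V embedded densely via \<iota>Q\<close>
    and \<iota>Q_lin: "linear \<iota>Q"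
    and \<iota>Q_inner: "\<forall>x y. inner (\<iota>Q x) (\<iota>Q y) = \<omega> (D x) y"
    and \<iota>Q_dense: "closure (range \<iota>Q) = UNIV"
    \<comment> \<open>\<eta> : V \<rightarrow> V_Q with Q(\<eta> x, y) = \<omega>(x,y)\<close>
    and \<eta>_def: "\<forall>x y. inner (\<eta> x) (\<iota>Q y) = \<omega> x y"
    \<comment> \<open>(C3) \<eta> is continuous\<close>
    and C3: "continuous_on UNIV \<eta>"
    \<comment> \<open>V_\<kappa>: Hilbert completion of (V,\<kappa>), \<kappa>(x,y) = Q(\<eta> x, \<eta> y)\<close>
    and \<iota>K_lin: "linear \<iota>K"
    and \<iota>K_inner: "\<forall>x y. inner (\<iota>K x) (\<iota>K y) = inner (\<eta> x) (\<eta> y)"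
    and \<iota>K_dense: "closure (range \<iota>K) = UNIV"
  shows "single_valued_rel (closure_graph \<iota>Q D)
       \<and> (\<forall>x. (\<eta> x, \<iota>Q x) \<in> closure_graph \<iota>Q D)
       \<and> (\<forall>x y. norm (\<eta> x - \<eta> y) = norm (\<iota>K x - \<iota>K y))
       \<and> (\<exists>\<eta>h :: 'k \<Rightarrow> 'h. linear \<eta>h \<and> bij \<eta>h \<and> (\<forall>u w. inner (\<eta>h u) (\<eta>h w) = inner u w)
            \<and> (\<forall>x. \<eta>h (\<iota>K x) = \<eta> x)
            \<and> (\<forall>x. (\<eta>h (\<iota>K x), \<eta>h (\<iota>K (D x))) \<in> closure_graph \<iota>Q D))
       \<and> single_valued_rel (closure_graph \<iota>K D)
       \<and> injective_rel (closure_graph \<iota>K D)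
       \<and> closure (snd ` closure_graph \<iota>K D) = UNIV"
proof -
  interpret osc \<omega> \<gamma> D \<iota>Q \<eta> \<iota>K
    by (rule osc.intro[OF lcs \<omega>_bilinear \<omega>_alt \<omega>_nondeg \<omega>_cont action D_def \<iota>Q_lin \<iota>Q_inner
          \<iota>Q_dense \<eta>_def \<iota>K_lin \<iota>K_inner \<iota>K_dense])
  show ?thesis by (rule main)
qed

end
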